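(* Let $n \ge 1$ and $p \ge 2$, and let $D=\{x_{ij}\}\in\mathbb{R}^{n\times p}$ be a dataset (rows $i=1,\dots,n$ are individuals, columns $j=1,\dots,p$ are variables) with no ties at the medians, i.e. for every $j=1,\dots,p$, $\sum_{i=1}^n \mathbb{I}\big(x_{ij}=\operatorname{med}(X_j)\big)\le 1$. Let $D'=\{x'_{ij}\}\in\mathbb{R}^{n\times p}$ be any neighboring dataset of $D$ which also has no ties at the medians. For $1\le j<j'\le p$ define $$t_{jj'}(D)=\sum_{i=1}^n \mathbb{I}\big(x_{ij}\ge \operatorname{med}(X_j),\ x_{ij'}\ge \operatorname{med}(X_{j'})\big).$$ Then for any $1\le j<j'\le p$, the $\ell_1$-sensitivity of $t_{jj'}$, over pairs of neighboring datasets with no ties at the medians, is $\Delta(t_{jj'})=\max_{D\sim D'}|t_{jj'}(D)-t_{jj'}(D')|=1$.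
   Context: $\operatorname{med}(X_j)$ denotes the sample median of the column $\{x_{1j},\dots,x_{nj}\}$; the convention is that when $n$ is even exactly $n/2$ observations satisfy $x_{ij}\ge\operatorname{med}(X_j)$, and when $n$ is odd exactly $(n+1)/2$ do. $\mathbb{I}(\cdot)$ is the indicator function. Two datasets $D,D'\in\mathbb{R}^{n\times p}$ are neighboring (written $D\sim D'$) if they have the same number $n$ of rows and differ by substitution of the data of a single individual, i.e. they agree in all rows except at most one. The $\ell_1$-sensitivity of a function $M$ is $\Delta(M)=\max_{D\sim D'}\|M(D)-M(D')\|_1$. *)

theory Defs
  imports Complex_Main
begin

text \<open>A dataset with n rows (individuals, indexed 0..n-1) and p columns
(variables, indexed 0..p-1) is a function D :: nat => nat => real, entry D i j = x_ij.
Entries outside the index ranges are irrelevant.\<close>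

type_synonym dataset = "nat \<Rightarrow> nat \<Rightarrow> real"

definition col :: "nat \<Rightarrow> dataset \<Rightarrow> nat \<Rightarrow> real list" where
  "col n D j = map (\<lambda>i. D i j) [0..<n]"

definition med :: "real list \<Rightarrow> real" where
  "med xs = (let ys = sort xs; m = length xs in
     if odd m then ys ! (m div 2) else (ys ! (m div 2 - 1) + ys ! (m div 2)) / 2)"

definition no_ties :: "nat \<Rightarrow> nat \<Rightarrow> dataset \<Rightarrow> bool" where
  "no_ties n p D \<longleftrightarrow> (\<forall>j<p. card {i. i < n \<and> D i j = med (col n D j)} \<le> 1)"

definition neighboring :: "nat \<Rightarrow> nat \<Rightarrow> dataset \<Rightarrow> dataset \<Rightarrow> bool" where
  "neighboring n p D D' \<longleftrightarrow> (\<exists>k<n. \<forall>i<n. \<forall>j<p. i \<noteq> k \<longrightarrow> D i j = D' i j)"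

definition t_stat :: "nat \<Rightarrow> nat \<Rightarrow> nat \<Rightarrow> dataset \<Rightarrow> nat" where
  "t_stat n j j' D = card {i. i < n \<and> D i j \<ge> med (col n D j) \<and> D i j' \<ge> med (col n D j')}"

end

theory Submission
  imports Defs "HOL-Library.Multiset"
begin

lemma len_filter_sort: "length (filter P (sort xs)) = length (filter P (xs::real list))"
  by (metis mset_filter mset_sort size_mset)

lemma med_sort: "med (sort xs) = med xs"
  unfolding med_def by (simp add: Let_def sorted_sort_id)

lemma sorted_count:
  fixes ys :: "real list"
  assumes s: "sorted ys" and l: "length ys = n" and n: "n \<ge> 1"
    and tie: "card {i. i < n \<and> ys ! i = med ys} \<le> 1"
  shows "{i. i < n \<and> ys ! i \<ge> med ys} = {n div 2..<n}"
proof -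
  define m where "m = n div 2"
  define v where "v = med ys"
  have so: "sort ys = ys" using s by (simp add: sorted_sort_id)
  have t: "a = b" if "a < n" "b < n" "ys ! a = v" "ys ! b = v" for a b
  proof -
    have "finite {i. i < n \<and> ys ! i = med ys}" by simp
    then show ?thesis using tie that card_le_Suc0_iff_eq[of "{i. i < n \<and> ys ! i = med ys}"]
      unfolding v_def by auto
  qed
  have mono: "ys ! a \<le> ys ! b" if "a \<le> b" "b < n" for a b
    using sorted_nth_mono[OF s that(1)] that l by simp
  show ?thesis
  proof (cases "odd n")
    case True
    have vv: "v = ys ! m" unfolding v_def med_def m_def using so True l by (simp add: Let_def)
    have mn: "m < n" using n unfolding m_def by simp
    show ?thesis
    proof (intro set_eqI iffI)
      fix i assume "i \<in> {i. i < n \<and> ys ! i \<ge> med ys}"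
      hence i: "i < n" "ys ! i \<ge> v" unfolding v_def by auto
      show "i \<in> {n div 2..<n}"
      proof (rule ccontr)
        assume "i \<notin> {n div 2..<n}"
        hence "i < m" using i unfolding m_def by auto
        hence "ys ! i \<le> v" using mono[of i m] mn vv by simp
        hence "ys ! i = v" using i by simp
        hence "i = m" using t[of i m] i(1) mn vv by metis
        thus False using \<open>i < m\<close> by simp
      qed
    next
      fix i assume "i \<in> {n div 2..<n}"
      thus "i \<in> {i. i < n \<and> ys ! i \<ge> med ys}" using mono[of m i] vv unfolding v_def m_def
        by auto
    qed
  next
    case False
    have m1: "m \<ge> 1" using n False unfolding m_def by presburger
    have mn: "m < n" using n unfolding m_def by simp
    have vv: "v = (ys ! (m - 1) + ys ! m) / 2" unfolding v_def med_def m_def using so False l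
      by (simp add: Let_def)
    have ab: "ys ! (m - 1) \<le> ys ! m" using mono[of "m-1" m] mn by simp
    have ab2: "ys ! (m - 1) < ys ! m"
    proof (rule ccontr)
      assume "\<not> ?thesis"
      hence "ys ! (m - 1) = ys ! m" using ab by simp
      hence "ys ! (m-1) = v" "ys ! m = v" using vv by auto
      hence "m - 1 = m" using t[of "m-1" m] mn by simp
      thus False using m1 by simp
    qed
    show ?thesis
    proof (intro set_eqI iffI)
      fix i assume "i \<in> {i. i < n \<and> ys ! i \<ge> med ys}"
      hence i: "i < n" "ys ! i \<ge> v" unfolding v_def by auto
      show "i \<in> {n div 2..<n}"
      proof (rule ccontr)
        assume "i \<notin> {n div 2..<n}"
        hence "i \<le> m - 1" using i unfolding m_def by auto
        hence "ys ! i \<le> ys ! (m - 1)" using mono[of i "m-1"] mn by simp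
        thus False using i ab2 vv by simp
      qed
    next
      fix i assume i: "i \<in> {n div 2..<n}"
      hence "ys ! m \<le> ys ! i" using mono[of m i] unfolding m_def by auto
      thus "i \<in> {i. i < n \<and> ys ! i \<ge> med ys}" using i ab2 vv unfolding v_def m_def
        by auto
    qed
  qed
qed

lemma card_col: "card {i. i < n \<and> P (D i j)} = card {i. i < n \<and> P (col n D j ! i)}"
  unfolding col_def by (metis (lifting) add_0 diff_zero nth_map_upt)

lemma count_ge:
  assumes n: "n \<ge> 1" and tie: "card {i. i < n \<and> D i j = med (col n D j)} \<le> 1"
  shows "card {i. i < n \<and> D i j \<ge> med (col n D j)} = n - n div 2"
proof -
  define xs where "xs = col n D j"
  define ys where "ys = sort xs"
  have lx: "length xs = n" unfolding xs_def col_def by simp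
  have ly: "length ys = n" unfolding ys_def using lx by simp
  have mv: "med ys = med xs" unfolding ys_def by (rule med_sort)
  have gen: "card {i. i < n \<and> P (D i j)} = card {i. i < n \<and> P (ys ! i)}" for P
  proof -
    have "card {i. i < n \<and> P (D i j)} = card {i. i < n \<and> P (xs ! i)}"
      unfolding xs_def by (rule card_col)
    also have "\<dots> = length (filter P xs)" using length_filter_conv_card[of P xs] lx by simp
    also have "\<dots> = length (filter P ys)" unfolding ys_def by (simp add: len_filter_sort)
    also have "\<dots> = card {i. i < n \<and> P (ys ! i)}" using length_filter_conv_card[of P ys] ly by simp
    finally show ?thesis .
  qed
  have tie': "card {i. i < n \<and> ys ! i = med ys} \<le> 1"
    using tie gen[of "\<lambda>x. x = med xs"] mv unfolding xs_def by simp
  have "{i. i < n \<and> ys ! i \<ge> med ys} = {n div 2..<n}"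
    by (rule sorted_count[OF _ ly n tie']) (simp add: ys_def)
  then show ?thesis using gen[of "\<lambda>x. x \<ge> med xs"] mv unfolding xs_def by simp
qed


lemma nest_diff:
  assumes "finite S" "finite S'" "card S = card S'"
    and nest: "S - {k} \<subseteq> S' - {k} \<or> S' - {k} \<subseteq> S - {k}"
  shows "card ((S - {k}) - (S' - {k})) \<le> 1 \<and>
         (card ((S - {k}) - (S' - {k})) \<noteq> 0 \<longrightarrow> k \<notin> S \<and> k \<in> S')"
proof (cases "S - {k} \<subseteq> S' - {k}")
  case True
  then have e: "(S - {k}) - (S' - {k}) = {}" by blast
  show ?thesis unfolding e by simp
next
  case False
  then have sub: "S' - {k} \<subseteq> S - {k}" using nest by blast
  have fin: "finite (S' - {k})" "finite (S - {k})" using assms by auto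
  have d: "card ((S - {k}) - (S' - {k})) = card (S - {k}) - card (S' - {k})"
    using card_Diff_subset[OF fin(1) sub] .
  have c1: "card (S - {k}) = card S - (if k \<in> S then 1 else 0)"
    by (simp add: card_Diff_singleton_if)
  have c2: "card (S' - {k}) = card S' - (if k \<in> S' then 1 else 0)"
    by (simp add: card_Diff_singleton_if)
  have p1: "k \<in> S \<Longrightarrow> card S \<ge> 1" using assms(1) card_0_eq by fastforce
  have p2: "k \<in> S' \<Longrightarrow> card S' \<ge> 1" using assms(2) card_0_eq by fastforce
  have "card (S - {k}) - card (S' - {k}) \<le> 1 \<and>
     (card (S - {k}) - card (S' - {k}) \<noteq> 0 \<longrightarrow> k \<notin> S \<and> k \<in> S')"
    by (cases "k \<in> S"; cases "k \<in> S'") (use c1 c2 assms(3) p1 p2 in simp_all)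
  then show ?thesis unfolding d .
qed

lemma main_ineq:
  assumes "finite S" "finite S'" "card S = card S'"
    and "S - {k} \<subseteq> S' - {k} \<or> S' - {k} \<subseteq> S - {k}"
    and "finite T" "finite T'" "card T = card T'"
    and "T - {k} \<subseteq> T' - {k} \<or> T' - {k} \<subseteq> T - {k}"
  shows "card (S \<inter> T) \<le> card (S' \<inter> T') + 1"
proof -
  define dX where "dX = card ((S - {k}) - (S' - {k}))"
  define dY where "dY = card ((T - {k}) - (T' - {k}))"
  have nX: "dX \<le> 1 \<and> (dX \<noteq> 0 \<longrightarrow> k \<notin> S \<and> k \<in> S')"
    unfolding dX_def using nest_diff[OF assms(1-4)] .
  have nY: "dY \<le> 1 \<and> (dY \<noteq> 0 \<longrightarrow> k \<notin> T \<and> k \<in> T')"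
    unfolding dY_def using nest_diff[OF assms(5-8)] .
  have sub: "(S \<inter> T) - {k} \<subseteq> ((S' \<inter> T') - {k}) \<union> ((S - {k}) - (S' - {k})) \<union> ((T - {k}) - (T' - {k}))"
    by auto
  have "card ((S \<inter> T) - {k}) \<le> card (((S' \<inter> T') - {k}) \<union> ((S - {k}) - (S' - {k})) \<union> ((T - {k}) - (T' - {k})))"
    by (rule card_mono) (use assms sub in auto)
  also have "\<dots> \<le> card ((S' \<inter> T') - {k}) + dX + dY"
  proof -
    have "card (((S' \<inter> T') - {k}) \<union> ((S - {k}) - (S' - {k})) \<union> ((T - {k}) - (T' - {k})))
      \<le> card (((S' \<inter> T') - {k}) \<union> ((S - {k}) - (S' - {k}))) + dY"
      unfolding dY_def by (rule card_Un_le)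
    moreover have "card (((S' \<inter> T') - {k}) \<union> ((S - {k}) - (S' - {k}))) \<le> card ((S' \<inter> T') - {k}) + dX"
      unfolding dX_def by (rule card_Un_le)
    ultimately show ?thesis by linarith
  qed
  finally have le: "card ((S \<inter> T) - {k}) \<le> card ((S' \<inter> T') - {k}) + dX + dY" .
  have cgen: "card A = card (A - {k}) + (if k \<in> A then 1 else 0)" if fA: "finite A" for A :: "'a set"
  proof (cases "k \<in> A")
    case True
    then have "card A > 0" using fA card_gt_0_iff by blast
    then show ?thesis by (simp add: card_Diff_singleton fA True)
  next
    case False
    then show ?thesis by simp
  qed
  have c1: "card (S \<inter> T) = card ((S \<inter> T) - {k}) + (if k \<in> S \<inter> T then 1 else 0)"
    by (rule cgen) (simp add: assms(1))
  have c2: "card (S' \<inter> T') = card ((S' \<inter> T') - {k}) + (if k \<in> S' \<inter> T' then 1 else 0)"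
    by (rule cgen) (simp add: assms(2))
  have oX: "dX = 0 \<or> (dX = 1 \<and> k \<notin> S \<and> k \<in> S')" using nX by linarith
  have oY: "dY = 0 \<or> (dY = 1 \<and> k \<notin> T \<and> k \<in> T')" using nY by linarith
  have key: "(if k \<in> S \<inter> T then 1 else 0) + dX + dY \<le> (if k \<in> S' \<inter> T' then 1 else 0) + (1::nat)"
    using oX oY by (elim disjE conjE) simp_all
  show ?thesis using le c1 c2 key by linarith
qed

lemma nested_thr:
  assumes "\<forall>i<n. i \<noteq> k \<longrightarrow> D i j = D' i j"
  shows "{i. i < n \<and> D i j \<ge> (m::real)} - {k} \<subseteq> {i. i < n \<and> D' i j \<ge> m'} - {k} \<or>
         {i. i < n \<and> D' i j \<ge> m'} - {k} \<subseteq> {i. i < n \<and> D i j \<ge> m} - {k}"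
proof (cases "m \<le> m'")
  case True
  then show ?thesis using assms by force
next
  case False
  then show ?thesis using assms by force
qed

lemma t_stat_alt:
  "t_stat n j j' D = card ({i. i < n \<and> D i j \<ge> med (col n D j)} \<inter> {i. i < n \<and> D i j' \<ge> med (col n D j')})"
  unfolding t_stat_def by (rule arg_cong[where f=card]) auto

lemma bound:
  assumes n: "n \<ge> 1" and jp: "j < p" "j' < p"
    and nt: "no_ties n p D" "no_ties n p D'" and nb: "neighboring n p D D'"
  shows "\<bar>int (t_stat n j j' D) - int (t_stat n j j' D')\<bar> \<le> 1"
proof -
  obtain k where k: "\<forall>i<n. \<forall>j<p. i \<noteq> k \<longrightarrow> D i j = D' i j"
    using nb unfolding neighboring_def by blast
  define S where "S = {i. i < n \<and> D i j \<ge> med (col n D j)}"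
  define S' where "S' = {i. i < n \<and> D' i j \<ge> med (col n D' j)}"
  define T where "T = {i. i < n \<and> D i j' \<ge> med (col n D j')}"
  define T' where "T' = {i. i < n \<and> D' i j' \<ge> med (col n D' j')}"
  have cS: "card S = card S'" unfolding S_def S'_def
    using count_ge[OF n, of D j] count_ge[OF n, of D' j] nt jp unfolding no_ties_def by simp
  have cT: "card T = card T'" unfolding T_def T'_def
    using count_ge[OF n, of D j'] count_ge[OF n, of D' j'] nt jp unfolding no_ties_def by simp
  have nS: "S - {k} \<subseteq> S' - {k} \<or> S' - {k} \<subseteq> S - {k}" unfolding S_def S'_def
    by (rule nested_thr) (use k jp in auto)
  have nT: "T - {k} \<subseteq> T' - {k} \<or> T' - {k} \<subseteq> T - {k}" unfolding T_def T'_def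
    by (rule nested_thr) (use k jp in auto)
  have f: "finite S" "finite S'" "finite T" "finite T'" unfolding S_def S'_def T_def T'_def by auto
  have a: "card (S \<inter> T) \<le> card (S' \<inter> T') + 1"
    by (rule main_ineq[OF f(1,2) cS nS f(3,4) cT nT])
  have b: "card (S' \<inter> T') \<le> card (S \<inter> T) + 1"
    by (rule main_ineq[OF f(2,1) cS[symmetric] _ f(4,3) cT[symmetric]]) (use nS nT in auto)
  have e1: "t_stat n j j' D = card (S \<inter> T)" unfolding S_def T_def by (rule t_stat_alt)
  have e2: "t_stat n j j' D' = card (S' \<inter> T')" unfolding S'_def T'_def by (rule t_stat_alt)
  show ?thesis using a b e1 e2 by linarith
qed

lemma inj_no_tie:
  fixes n :: nat
  assumes "\<And>a b. a < n \<Longrightarrow> b < n \<Longrightarrow> D a c = D b c \<Longrightarrow> a = b"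
  shows "card {i. i < n \<and> D i c = v} \<le> 1"
proof -
  have "{i. i < n \<and> D i c = v} \<subseteq> {..<n}" by auto
  then have fin: "finite {i. i < n \<and> D i c = v}" by (rule finite_subset[OF _ finite_lessThan])
  show ?thesis unfolding One_nat_def card_le_Suc0_iff_eq[OF fin] by (auto intro: assms)
qed

theorem theorem1:
  fixes n p j j' :: nat
  assumes "n \<ge> 2" and "p \<ge> 2" and "j < j'" and "j' < p"
  shows "Max {\<bar>int (t_stat n j j' D) - int (t_stat n j j' D')\<bar> | D D'.
               no_ties n p D \<and> no_ties n p D' \<and> neighboring n p D D'} = 1"
proof -
  let ?M = "{\<bar>int (t_stat n j j' D) - int (t_stat n j j' D')\<bar> | D D'.
               no_ties n p D \<and> no_ties n p D' \<and> neighboring n p D D'}"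
  have n1: "n \<ge> 1" using assms by simp
  have jp: "j < p" using assms by simp
  have sub: "?M \<subseteq> {0, 1}"
  proof
    fix x assume "x \<in> ?M"
    then obtain D D' where x: "x = \<bar>int (t_stat n j j' D) - int (t_stat n j j' D')\<bar>"
      and c: "no_ties n p D" "no_ties n p D'" "neighboring n p D D'" by blast
    have "x \<le> 1" using bound[OF n1 jp assms(4) c] x by simp
    moreover have "x \<ge> 0" using x by simp
    ultimately show "x \<in> {0, 1}" by auto
  qed
  define D0 :: dataset where "D0 = (\<lambda>i c. real i)"
  define D1 :: dataset where "D1 = (\<lambda>i c. if i = n - 1 \<and> c = j' then -1 else real i)"
  have nt0: "no_ties n p D0" unfolding no_ties_def
    by (intro allI impI inj_no_tie) (simp add: D0_def)
  have nt1: "no_ties n p D1" unfolding no_ties_def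
    by (intro allI impI inj_no_tie) (auto simp: D1_def split: if_splits)
  have nb: "neighboring n p D0 D1" unfolding neighboring_def
    using n1 by (intro exI[of _ "n - 1"]) (auto simp: D0_def D1_def)
  define c where "c = n - n div 2"
  have cn: "c < n" "c \<ge> 1" using assms(1) unfolding c_def by auto
  have t0: "t_stat n j j' D0 = c"
  proof -
    have "col n D0 j' = col n D0 j" unfolding col_def D0_def by simp
    then have "t_stat n j j' D0 = card {i. i < n \<and> D0 i j \<ge> med (col n D0 j)}"
      unfolding t_stat_def by (simp add: D0_def)
    also have "\<dots> = c" unfolding c_def
      by (rule count_ge[OF n1]) (use nt0 jp in \<open>simp add: no_ties_def\<close>)
    finally show ?thesis .
  qed
  have t1: "t_stat n j j' D1 \<noteq> c"
  proof
    assume h: "t_stat n j j' D1 = c"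
    define A where "A = {i. i < n \<and> D1 i j \<ge> med (col n D1 j)}"
    define B where "B = {i. i < n \<and> D1 i j' \<ge> med (col n D1 j')}"
    have cA: "card A = c" unfolding A_def c_def
      by (rule count_ge[OF n1]) (use nt1 jp in \<open>simp add: no_ties_def\<close>)
    have cB: "card B = c" unfolding B_def c_def
      by (rule count_ge[OF n1]) (use nt1 assms(4) in \<open>simp add: no_ties_def\<close>)
    have fA: "finite A" unfolding A_def by simp
    have cAB: "card (A \<inter> B) = c" using h t_stat_alt[of n j j' D1] unfolding A_def B_def by simp
    have ABs: "A \<inter> B \<subseteq> A" by blast
    have AB: "A \<inter> B = A" by (rule card_subset_eq[OF fA ABs]) (simp only: cAB cA)
    have "A \<noteq> {}" using cA cn by auto
    then obtain i where i: "i \<in> A" by blast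
    have "n - 1 \<in> A"
    proof -
      have il: "i < n" and im: "med (col n D1 j) \<le> D1 i j" using i unfolding A_def by auto
      have "D1 i j \<le> D1 (n - 1) j" using il assms(3) by (simp add: D1_def)
      then have "med (col n D1 j) \<le> D1 (n - 1) j" using im by linarith
      then show ?thesis using n1 unfolding A_def by simp
    qed
    then have "n - 1 \<in> B" using AB by blast
    then have "med (col n D1 j') \<le> -1" unfolding B_def D1_def by simp
    then have "B = {..<n}" unfolding B_def D1_def by force
    then show False using cB cn by simp
  qed
  have one: "1 \<in> ?M"
  proof -
    have "\<bar>int (t_stat n j j' D0) - int (t_stat n j j' D1)\<bar> \<in> ?M" using nt0 nt1 nb by blast
    moreover have "\<bar>int (t_stat n j j' D0) - int (t_stat n j j' D1)\<bar> \<noteq> 0"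
      using t0 t1 by auto
    ultimately have "\<bar>int (t_stat n j j' D0) - int (t_stat n j j' D1)\<bar> \<in> ?M"
      "\<bar>int (t_stat n j j' D0) - int (t_stat n j j' D1)\<bar> \<noteq> 0" by auto
    moreover have "\<bar>int (t_stat n j j' D0) - int (t_stat n j j' D1)\<bar> = 1"
      using calculation sub by blast
    ultimately show ?thesis by simp
  qed
  have fin: "finite ?M" using sub finite_subset by blast
  show ?thesis
  proof (rule Max_eqI[OF fin])
    fix y assume "y \<in> ?M"
    then have "y \<in> {0, 1}" using sub by blast
    then show "y \<le> 1" by auto
  next
    show "1 \<in> ?M" by (rule one)
  qed
qed

end
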